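(* Let $\mathcal O$ be the suboperad of $\mathrm{CNCB}$ generated by $r:=T_{ubu}$ and $w:=T_{bub}$. Then $\mathcal O$ admits the presentation with generators $r,w$ of arity $2$ and relations $$w\circ_1 w=w\circ_2 w,\qquad r\circ_1 r=r\circ_2 r.$$ That is, $\mathcal O$ is isomorphic, via the morphism sending the generators to $r$ and $w$, to the quotient of the free operad on two binary generators by the operadic congruence generated by these relations.
   Context: For $n\ge2$, a bicoloured noncrossing configuration (BNC) of size $n$ is a regular polygon with vertices $1,\dots,n+1$ clockwise, together with disjoint sets of blue and red arcs among the arcs $(i,j)$, $1\le i<j\le n+1$. The arcs $(i,i+1)$ are the edges ($i$th edge), $(1,n+1)$ is the base, and the others are diagonals. Coloured arcs are pairwise noncrossing ($(i,j),(k,l)$ cross iff $i<k<j<l$ or $k<i<l<j$), and red arcs are diagonals. There is one BNC of size $1$, a blue segment, which is the unit. The operad $\mathrm{CNCB}$ has the BNCs as elements (arity = size). Its composition $\mathfrak C\circ_i\mathfrak D$ ($\mathfrak C$ of size $n$, $\mathfrak D$ of size $m$) glues the base of $\mathfrak D$ on the $i$th edge of $\mathfrak C$. Arcs $(a,b)$ of $\mathfrak C$ become $(\sigma(a),\sigma(b))$ with $\sigma(v)=v$ for $v\le i$ and $v+m-1$ otherwise, and arcs $(a,b)$ of $\mathfrak D$ become $(a+i-1,b+i-1)$, keeping colours. The exception is the arc $(i,i+m)$, which is red if the $i$th edge of $\mathfrak C$ and the base of $\mathfrak D$ are both uncoloured, blue if both are blue, and uncoloured otherwise. For $x,y,z\in\{b,u\}$,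 $T_{xyz}$ denotes the BNC of size $2$ (a triangle with vertices $1,2,3$) whose first edge $(1,2)$ has colour $x$, whose base $(1,3)$ has colour $y$, and whose second edge $(2,3)$ has colour $z$, where $b$ = blue and $u$ = uncoloured. The suboperad generated by a set is the smallest suboperad containing it. *)

theory Defs
  imports Main
begin

datatype colour = Blue | Red | Unc

text \<open>A BNC of size n: vertices 1..n+1; col i j is the colour of the arc (i,j)
  (Unc = uncoloured). Arcs outside 1 <= i < j <= n+1 are canonically Unc.\<close>
record bnc =
  sz :: nat
  col :: "nat \<Rightarrow> nat \<Rightarrow> colour"

definition unit_bnc :: bnc where
  "unit_bnc = \<lparr>sz = 1, col = (\<lambda>i j. if i = 1 \<and> j = 2 then Blue else Unc)\<rparr>"

definition is_bnc :: "bnc \<Rightarrow> bool" where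
  "is_bnc B \<longleftrightarrow> B = unit_bnc \<or>
     (sz B \<ge> 2
      \<and> (\<forall>i j. col B i j \<noteq> Unc \<longrightarrow> 1 \<le> i \<and> i < j \<and> j \<le> sz B + 1)
      \<and> (\<forall>i j. col B i j = Red \<longrightarrow> j \<noteq> i + 1 \<and> \<not> (i = 1 \<and> j = sz B + 1))
      \<and> (\<forall>i j k l. col B i j \<noteq> Unc \<and> col B k l \<noteq> Unc \<longrightarrow> \<not> (i < k \<and> k < j \<and> j < l)))"

definition glue_colour :: "colour \<Rightarrow> colour \<Rightarrow> colour" where
  "glue_colour c d = (if c = Unc \<and> d = Unc then Red
                      else if c = Blue \<and> d = Blue then Blue else Unc)"

text \<open>Partial composition C o_i D (glue base of D on i-th edge of C).\<close>
definition comp :: "bnc \<Rightarrow> nat \<Rightarrow> bnc \<Rightarrow> bnc" where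
  "comp C i D =
    (let n = sz C; m = sz D;
         inimg = (\<lambda>v. v \<le> i \<or> i + m \<le> v);
         sinv = (\<lambda>v. if v \<le> i then v else v + 1 - m)
     in \<lparr>sz = n + m - 1,
         col = (\<lambda>p q.
           if \<not> (1 \<le> p \<and> p < q \<and> q \<le> n + m) then Unc
           else if p = i \<and> q = i + m then glue_colour (col C i (i + 1)) (col D 1 (m + 1))
           else if i \<le> p \<and> q \<le> i + m then col D (p + 1 - i) (q + 1 - i)
           else if inimg p \<and> inimg q then col C (sinv p) (sinv q)
           else Unc)\<rparr>)"

definition suboperad :: "bnc set \<Rightarrow> bool" where
  "suboperad S \<longleftrightarrow> S \<subseteq> {B. is_bnc B} \<and> unit_bnc \<in> S
     \<and> (\<forall>C\<in>S. \<forall>D\<in>S. \<forall>i. 1 \<le> i \<and> i \<le> sz C \<longrightarrow> comp C i D \<in> S)"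

definition generated_suboperad :: "bnc set \<Rightarrow> bnc set" where
  "generated_suboperad G = \<Inter>{S. suboperad S \<and> G \<subseteq> S}"

definition T :: "colour \<Rightarrow> colour \<Rightarrow> colour \<Rightarrow> bnc" where
  "T x y z = \<lparr>sz = 2, col = (\<lambda>i j. if i = 1 \<and> j = 2 then x
                                  else if i = 1 \<and> j = 3 then y
                                  else if i = 2 \<and> j = 3 then z else Unc)\<rparr>"

definition r_gen :: bnc where "r_gen = T Unc Blue Unc"
definition w_gen :: bnc where "w_gen = T Blue Unc Blue"

datatype tree = Leaf | R tree tree | W tree tree

fun leaves :: "tree \<Rightarrow> nat" where
  "leaves Leaf = 1"
| "leaves (R a b) = leaves a + leaves b"
| "leaves (W a b) = leaves a + leaves b"

fun graft :: "tree \<Rightarrow> nat \<Rightarrow> tree \<Rightarrow> tree" where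
  "graft Leaf i s = (if i = 1 then s else Leaf)"
| "graft (R a b) i s = (if i \<le> leaves a then R (graft a i s) b else R a (graft b (i - leaves a) s))"
| "graft (W a b) i s = (if i \<le> leaves a then W (graft a i s) b else W a (graft b (i - leaves a) s))"

inductive cong :: "tree \<Rightarrow> tree \<Rightarrow> bool" where
  relW: "cong (W (W Leaf Leaf) Leaf) (W Leaf (W Leaf Leaf))"
| relR: "cong (R (R Leaf Leaf) Leaf) (R Leaf (R Leaf Leaf))"
| refl: "cong t t"
| sym: "cong t s \<Longrightarrow> cong s t"
| trans: "cong t s \<Longrightarrow> cong s u \<Longrightarrow> cong t u"
| comp: "cong t t' \<Longrightarrow> cong s s' \<Longrightarrow> 1 \<le> i \<Longrightarrow> i \<le> leaves t \<Longrightarrow> cong (graft t i s) (graft t' i s')"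

fun ev :: "tree \<Rightarrow> bnc" where
  "ev Leaf = unit_bnc"
| "ev (R a b) = comp (comp r_gen 2 (ev b)) 1 (ev a)"
| "ev (W a b) = comp (comp w_gen 2 (ev b)) 1 (ev a)"

end

theory Submission
  imports Defs
begin


definition node :: "colour \<Rightarrow> colour \<Rightarrow> nat \<Rightarrow> nat \<Rightarrow> (nat \<Rightarrow> nat \<Rightarrow> colour) \<Rightarrow> (nat \<Rightarrow> nat \<Rightarrow> colour) \<Rightarrow> nat \<Rightarrow> nat \<Rightarrow> colour" where
"node x y k l A B p q = (if p = 1 \<and> q = k + l + 1 then y
   else if p = 1 \<and> q = k + 1 then glue_colour x (A 1 (k+1))
   else if p = k + 1 \<and> q = k + l + 1 then glue_colour x (B 1 (l+1))
   else if 1 \<le> p \<and> p < q \<and> q \<le> k + 1 then A p q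
   else if k + 1 \<le> p \<and> p < q \<and> q \<le> k + l + 1 then B (p - k) (q - k)
   else Unc)"

fun colt :: "tree \<Rightarrow> nat \<Rightarrow> nat \<Rightarrow> colour" where
"colt Leaf p q = (if p = 1 \<and> q = 2 then Blue else Unc)"
| "colt (R a b) p q = node Unc Blue (leaves a) (leaves b) (colt a) (colt b) p q"
| "colt (W a b) p q = node Blue Unc (leaves a) (leaves b) (colt a) (colt b) p q"

definition gc :: "nat \<Rightarrow> (nat \<Rightarrow> nat \<Rightarrow> colour) \<Rightarrow> nat \<Rightarrow> nat \<Rightarrow> (nat \<Rightarrow> nat \<Rightarrow> colour) \<Rightarrow> nat \<Rightarrow> nat \<Rightarrow> colour" where
"gc n C i m D p q = (if \<not> (1 \<le> p \<and> p < q \<and> q \<le> n + m) then Unc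
           else if p = i \<and> q = i + m then glue_colour (C i (i + 1)) (D 1 (m + 1))
           else if i \<le> p \<and> q \<le> i + m then D (p + 1 - i) (q + 1 - i)
           else if (p \<le> i \<or> i + m \<le> p) \<and> (q \<le> i \<or> i + m \<le> q) then
              C (if p \<le> i then p else p + 1 - m) (if q \<le> i then q else q + 1 - m)
           else Unc)"

lemma comp_eq: "comp C i D = \<lparr>sz = sz C + sz D - 1, col = gc (sz C) (col C) i (sz D) (col D)\<rparr>"
  apply (simp add: comp_def Let_def)
  apply (rule ext)+ apply (simp add: gc_def)
  done

lemma leaves_pos: "leaves t \<ge> 1"
  by (induction t) auto

lemma leaves_nz[simp]: "leaves t \<noteq> 0" "0 < leaves t"
  using leaves_pos[of t] by auto

lemma colt_out: "\<not> (1 \<le> p \<and> p < q \<and> q \<le> leaves t + 1) \<Longrightarrow> colt t p q = Unc"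
  by (induction t arbitrary: p q) (auto simp: node_def)

lemma colt_base: "colt t 1 (leaves t + 1) = (case t of Leaf \<Rightarrow> Blue | R a b \<Rightarrow> Blue | W a b \<Rightarrow> Unc)"
  by (cases t) (auto simp: node_def)

lemma ev_eq: "ev t = \<lparr>sz = leaves t, col = colt t\<rparr>"
proof (induction t)
  case Leaf
  then show ?case by (auto simp: unit_bnc_def)
next
  case (R a b)
  show ?case
    apply (simp add: R comp_eq r_gen_def T_def)
    apply (rule ext)+
    using leaves_pos[of a] leaves_pos[of b] colt_out[of _ _ a] colt_out[of _ _ b]
    apply (auto simp: gc_def node_def)
    done
next
  case (W a b)
  show ?case
    apply (simp add: W comp_eq w_gen_def T_def)
    apply (rule ext)+
    using leaves_pos[of a] leaves_pos[of b] colt_out[of _ _ a] colt_out[of _ _ b]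
    apply (auto simp: gc_def node_def)
    done
qed




lemma glue_BU: "x \<in> {Blue,Unc} \<Longrightarrow> glue_colour Blue x = x" "x \<in> {Blue,Unc} \<Longrightarrow> glue_colour x Blue = x"
  by (auto simp: glue_colour_def)

context fixes n :: nat and C :: "nat \<Rightarrow> nat \<Rightarrow> colour" and i m :: nat and D :: "nat \<Rightarrow> nat \<Rightarrow> colour"
begin
lemma G0: "\<not> (1 \<le> p \<and> p < q \<and> q \<le> n + m) \<Longrightarrow> gc n C i m D p q = Unc"
  by (auto simp: gc_def)
lemma G1: "1 \<le> m \<Longrightarrow> 1 \<le> p \<Longrightarrow> p < q \<Longrightarrow> q \<le> i \<Longrightarrow> i \<le> n \<Longrightarrow> gc n C i m D p q = C p q"
  by (auto simp: gc_def)
lemma G2: "1 \<le> m \<Longrightarrow> 1 \<le> p \<Longrightarrow> p < i \<Longrightarrow> i < q \<Longrightarrow> q < i + m \<Longrightarrow> gc n C i m D p q = Unc"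
  by (auto simp: gc_def)
lemma G3: "1 \<le> m \<Longrightarrow> 1 \<le> p \<Longrightarrow> i \<le> p \<Longrightarrow> p < q \<Longrightarrow> q \<le> i + m \<Longrightarrow> \<not> (p = i \<and> q = i + m) \<Longrightarrow> i \<le> n \<Longrightarrow> gc n C i m D p q = D (p + 1 - i) (q + 1 - i)"
  by (auto simp: gc_def)
lemma G4: "1 \<le> m \<Longrightarrow> p = i \<Longrightarrow> q = i + m \<Longrightarrow> 1 \<le> i \<Longrightarrow> i \<le> n \<Longrightarrow> gc n C i m D p q = glue_colour (C i (i + 1)) (D 1 (m + 1))"
  by (auto simp: gc_def)
lemma G5: "1 \<le> m \<Longrightarrow> 1 \<le> p \<Longrightarrow> p \<le> i \<Longrightarrow> i + m \<le> q \<Longrightarrow> q \<le> n + m \<Longrightarrow> \<not> (p = i \<and> q = i + m) \<Longrightarrow> gc n C i m D p q = C p (q + 1 - m)"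
  by (auto simp: gc_def)
lemma G6: "1 \<le> m \<Longrightarrow> i < p \<Longrightarrow> p < i + m \<Longrightarrow> i + m < q \<Longrightarrow> gc n C i m D p q = Unc"
  by (auto simp: gc_def)
lemma G7: "1 \<le> m \<Longrightarrow> 1 \<le> i \<Longrightarrow> i + m \<le> p \<Longrightarrow> p < q \<Longrightarrow> q \<le> n + m \<Longrightarrow> gc n C i m D p q = C (p + 1 - m) (q + 1 - m)"
  by (auto simp: gc_def)
end

context fixes x y :: colour and k l :: nat and A B :: "nat \<Rightarrow> nat \<Rightarrow> colour"
begin
lemma N0: "k \<ge> 1 \<Longrightarrow> l \<ge> 1 \<Longrightarrow> \<not> (1 \<le> p \<and> p < q \<and> q \<le> k + l + 1) \<Longrightarrow> node x y k l A B p q = Unc"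
  by (auto simp: node_def)
lemma N1: "p = 1 \<Longrightarrow> q = k + l + 1 \<Longrightarrow> node x y k l A B p q = y"
  by (auto simp: node_def)
lemma N2: "p = 1 \<Longrightarrow> q = k + 1 \<Longrightarrow> l \<ge> 1 \<Longrightarrow> node x y k l A B p q = glue_colour x (A 1 (k+1))"
  by (auto simp: node_def)
lemma N3: "p = k + 1 \<Longrightarrow> q = k + l + 1 \<Longrightarrow> k \<ge> 1 \<Longrightarrow> node x y k l A B p q = glue_colour x (B 1 (l+1))"
  by (auto simp: node_def)
lemma N4: "1 \<le> p \<Longrightarrow> p < q \<Longrightarrow> q \<le> k + 1 \<Longrightarrow> \<not> (p = 1 \<and> q = k + 1) \<Longrightarrow> l \<ge> 1 \<Longrightarrow> node x y k l A B p q = A p q"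
  by (auto simp: node_def)
lemma N5: "k + 1 \<le> p \<Longrightarrow> p < q \<Longrightarrow> q \<le> k + l + 1 \<Longrightarrow> \<not> (p = k + 1 \<and> q = k + l + 1) \<Longrightarrow> k \<ge> 1 \<Longrightarrow> node x y k l A B p q = B (p - k) (q - k)"
  by (auto simp: node_def)
lemma N6: "p < k + 1 \<Longrightarrow> k + 1 < q \<Longrightarrow> \<not> (p = 1 \<and> q = k + l + 1) \<Longrightarrow> node x y k l A B p q = Unc"
  by (auto simp: node_def)
end

lemmas GN = G0 G1 G2 G3 G4 G5 G6 G7 N0 N1 N2 N3 N4 N5 N6

lemma glue_assoc: "x \<in> {Blue,Unc} \<Longrightarrow> d \<in> {Blue,Unc} \<Longrightarrow> glue_colour x (glue_colour Blue d) = glue_colour (glue_colour x Blue) d"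
  by (auto simp: glue_colour_def)

lemma node_graft_left:
  assumes "1 \<le> i" "i \<le> k" "1 \<le> m" "1 \<le> l" and K: "K + 1 = k + m"
    and x: "x \<in> {Blue,Unc}" and d: "D 1 (m+1) \<in> {Blue,Unc}"
    and A1: "k = 1 \<Longrightarrow> A 1 2 = Blue"
  shows "node x y K l (gc k A i m D) B = gc (k+l) (node x y k l A B) i m D"
proof (rule ext)+
  fix p q
  have K1: "K \<ge> 1" using assms by linarith
  consider (L0) "\<not>(1\<le>p \<and> p<q \<and> q \<le> k+l+m)" | (L1) "p=1 \<and> q = k+l+m" | (L2) "p=1 \<and> q=k+m"
     | (L3) "p = k+m \<and> q = k+l+m" | (L4) "1\<le>p \<and> p<q \<and> q \<le> k+m \<and> \<not>(p=1 \<and> q=k+m)"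
     | (L5) "k+m \<le> p \<and> p<q \<and> q \<le> k+l+m \<and> \<not>(p = k+m \<and> q = k+l+m)"
     | (L6) "1 \<le> p \<and> p < k+m \<and> k+m < q \<and> q \<le> k+l+m \<and> \<not>(p=1 \<and> q = k+l+m)"
    by linarith
  then show "node x y K l (gc k A i m D) B p q = gc (k+l) (node x y k l A B) i m D p q"
  proof cases
    case L0
    then have "\<not>(1\<le>p \<and> p<q \<and> q \<le> K+l+1)" using K by linarith
    then show ?thesis using assms K1 L0 by (simp add: GN)
  next
    case L1 then show ?thesis using assms K1 by (simp add: GN)
  next
    case L2
    show ?thesis
    proof (cases "k = 1 \<and> i = 1")
      case True then show ?thesis using L2 assms K1 by (simp add: GN numeral_2_eq_2 glue_assoc)
    next
      case False then show ?thesis using L2 assms K1 by (simp add: GN)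
    qed
  next
    case L3 then show ?thesis using assms K1 by (simp add: GN)
  next
    case L4
    consider "q \<le> i" | "p < i \<and> i < q \<and> q < i + m" | "i \<le> p \<and> q \<le> i + m \<and> \<not>(p = i \<and> q = i + m)"
      | "p = i \<and> q = i + m" | "p \<le> i \<and> i + m \<le> q \<and> \<not>(p = i \<and> q = i + m)" | "i < p \<and> p < i + m \<and> i + m < q"
      | "i + m \<le> p" using L4 by linarith
    then show ?thesis
    proof cases
      case 5
      have "node x y k l A B p (q+1-m) = A p (q+1-m)" by (rule N4) (use 5 L4 assms in linarith)+
      then show ?thesis using 5 L4 assms K1 by (simp add: GN)
    next
      case 7
      have "node x y k l A B (p+1-m) (q+1-m) = A (p+1-m) (q+1-m)" by (rule N4) (use 7 L4 assms in linarith)+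
      then show ?thesis using 7 L4 assms K1 by (simp add: GN)
    qed (use L4 assms K1 in \<open>simp_all add: GN\<close>)
  next
    case L5
    have e1: "node x y K l (gc k A i m D) B p q = B (p - K) (q - K)" by (rule N5) (use L5 K assms in linarith)+
    have e2: "node x y k l A B (p+1-m) (q+1-m) = B (p+1-m - k) (q+1-m - k)" by (rule N5) (use L5 assms in linarith)+
    have e3: "gc (k+l) (node x y k l A B) i m D p q = node x y k l A B (p+1-m) (q+1-m)" by (rule G7) (use L5 assms in linarith)+
    have "p - K = p + 1 - m - k" "q - K = q + 1 - m - k" using L5 K by linarith+
    then show ?thesis using e1 e2 e3 by simp
  next
    case L6
    have e1: "node x y K l (gc k A i m D) B p q = Unc" by (rule N6) (use L6 K assms in linarith)+
    consider "p \<le> i" | "i < p \<and> p < i + m" | "i + m \<le> p" by linarith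
    then show ?thesis
    proof cases
      case 1
      have "gc (k+l) (node x y k l A B) i m D p q = node x y k l A B p (q+1-m)" by (rule G5) (use 1 L6 assms in linarith)+
      also have "\<dots> = Unc" by (rule N6) (use 1 L6 assms in linarith)+
      finally show ?thesis using e1 by simp
    next
      case 2
      have "gc (k+l) (node x y k l A B) i m D p q = Unc" by (rule G6) (use 2 L6 assms in linarith)+
      then show ?thesis using e1 by simp
    next
      case 3
      have "gc (k+l) (node x y k l A B) i m D p q = node x y k l A B (p+1-m) (q+1-m)" by (rule G7) (use 3 L6 assms in linarith)+
      also have "\<dots> = Unc" by (rule N6) (use 3 L6 assms in linarith)+
      finally show ?thesis using e1 by simp
    qed
  qed
qed


lemma node_graft_right:
  assumes "k < i" "i \<le> k + l" "1 \<le> m" "1 \<le> k" and L: "L + 1 = l + m" and j: "j + k = i"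
    and x: "x \<in> {Blue,Unc}" and d: "D 1 (m+1) \<in> {Blue,Unc}"
    and B1: "l = 1 \<Longrightarrow> B 1 2 = Blue"
  shows "node x y k L A (gc l B j m D) = gc (k+l) (node x y k l A B) i m D"
proof (rule ext)+
  fix p q
  have L1: "L \<ge> 1" "l \<ge> 1" "j \<ge> 1" using assms by linarith+
  consider (R0) "\<not>(1\<le>p \<and> p<q \<and> q \<le> k+l+m)" | (R1) "p=1 \<and> q = k+l+m" | (R2) "p=1 \<and> q=k+1"
     | (R3) "p = k+1 \<and> q = k+l+m" | (R4) "1\<le>p \<and> p<q \<and> q \<le> k+1 \<and> \<not>(p=1 \<and> q=k+1)"
     | (R5) "k+1 \<le> p \<and> p<q \<and> q \<le> k+l+m \<and> \<not>(p = k+1 \<and> q = k+l+m)"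
     | (R6) "1 \<le> p \<and> p < k+1 \<and> k+1 < q \<and> q \<le> k+l+m \<and> \<not>(p=1 \<and> q = k+l+m)"
    by linarith
  then show "node x y k L A (gc l B j m D) p q = gc (k+l) (node x y k l A B) i m D p q"
  proof cases
    case R0
    then have "\<not>(1\<le>p \<and> p<q \<and> q \<le> k+L+1)" using L by linarith
    then show ?thesis using assms L1 R0 by (simp add: GN)
  next
    case R1
    have e1: "node x y k L A (gc l B j m D) p q = y" by (rule N1) (use R1 L in linarith)+
    have "gc (k+l) (node x y k l A B) i m D p q = node x y k l A B p (q+1-m)" by (rule G5) (use R1 assms in linarith)+
    also have "\<dots> = y" by (rule N1) (use R1 assms in linarith)+
    finally show ?thesis using e1 by simp
  next
    case R2
    have e1: "node x y k L A (gc l B j m D) p q = glue_colour x (A 1 (k+1))" by (rule N2) (use R2 L1 in linarith)+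
    have "gc (k+l) (node x y k l A B) i m D p q = node x y k l A B p q" by (rule G1) (use R2 assms in linarith)+
    also have "\<dots> = glue_colour x (A 1 (k+1))" by (rule N2) (use R2 L1 in linarith)+
    finally show ?thesis using e1 by simp
  next
    case R3
    have e1: "node x y k L A (gc l B j m D) p q = glue_colour x (gc l B j m D 1 (L+1))" by (rule N3) (use R3 L assms in linarith)+
    show ?thesis
    proof (cases "l = 1 \<and> j = 1")
      case True
      have e2: "gc l B j m D 1 (L+1) = glue_colour (B 1 2) (D 1 (m+1))"
        using G4[of m 1 j "L+1" l B D] True L assms by (simp add: numeral_2_eq_2)
      have e3: "gc (k+l) (node x y k l A B) i m D p q = glue_colour (node x y k l A B i (i+1)) (D 1 (m+1))"
        by (rule G4) (use R3 True assms in linarith)+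
      have e4: "node x y k l A B i (i+1) = glue_colour x (B 1 (l+1))" by (rule N3) (use R3 True assms in linarith)+
      show ?thesis using e1 e2 e3 e4 True B1 x d by (simp add: glue_assoc numeral_2_eq_2)
    next
      case False
      have e2: "gc l B j m D 1 (L+1) = B 1 (L+1+1-m)" by (rule G5) (use False L L1 assms in linarith)+
      have "gc (k+l) (node x y k l A B) i m D p q = node x y k l A B p (q+1-m)" by (rule G5) (use R3 False assms in linarith)+
      also have "\<dots> = glue_colour x (B 1 (l+1))" by (rule N3) (use R3 assms in linarith)+
      finally show ?thesis using e1 e2 L by simp
    qed
  next
    case R4
    have e1: "node x y k L A (gc l B j m D) p q = A p q" by (rule N4) (use R4 L1 in linarith)+
    have "gc (k+l) (node x y k l A B) i m D p q = node x y k l A B p q" by (rule G1) (use R4 assms in linarith)+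
    also have "\<dots> = A p q" by (rule N4) (use R4 L1 in linarith)+
    finally show ?thesis using e1 by simp
  next
    case R5
    have e1: "node x y k L A (gc l B j m D) p q = gc l B j m D (p - k) (q - k)" by (rule N5) (use R5 L assms in linarith)+
    consider (a) "q \<le> i" | (b) "p < i \<and> i < q \<and> q < i + m" | (c) "i \<le> p \<and> q \<le> i + m \<and> \<not>(p = i \<and> q = i + m)"
      | (d) "p = i \<and> q = i + m" | (e) "p \<le> i \<and> i + m \<le> q \<and> \<not>(p = i \<and> q = i + m)" | (f) "i < p \<and> p < i + m \<and> i + m < q"
      | (g) "i + m \<le> p" using R5 by linarith
    then show ?thesis
    proof cases
      case a
      have "gc l B j m D (p - k) (q - k) = B (p-k) (q-k)" by (rule G1) (use a R5 assms L1 in linarith)+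
      moreover have "gc (k+l) (node x y k l A B) i m D p q = node x y k l A B p q" by (rule G1) (use a R5 assms in linarith)+
      moreover have "node x y k l A B p q = B (p-k) (q-k)" by (rule N5) (use a R5 assms in linarith)+
      ultimately show ?thesis using e1 by simp
    next
      case b
      have "gc l B j m D (p - k) (q - k) = Unc" by (rule G2) (use b R5 assms L1 in linarith)+
      moreover have "gc (k+l) (node x y k l A B) i m D p q = Unc" by (rule G2) (use b R5 assms in linarith)+
      ultimately show ?thesis using e1 by simp
    next
      case c
      have "gc l B j m D (p - k) (q - k) = D (p - k + 1 - j) (q - k + 1 - j)" by (rule G3) (use c R5 assms L1 in linarith)+
      moreover have "gc (k+l) (node x y k l A B) i m D p q = D (p + 1 - i) (q + 1 - i)" by (rule G3) (use c R5 assms in linarith)+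
      moreover have "p - k + 1 - j = p + 1 - i" "q - k + 1 - j = q + 1 - i" using c R5 assms by linarith+
      ultimately show ?thesis using e1 by simp
    next
      case d
      have "gc l B j m D (p - k) (q - k) = glue_colour (B j (j+1)) (D 1 (m+1))" by (rule G4) (use d R5 assms L1 in linarith)+
      moreover have "gc (k+l) (node x y k l A B) i m D p q = glue_colour (node x y k l A B i (i+1)) (D 1 (m+1))" by (rule G4) (use d R5 assms in linarith)+
      moreover have "node x y k l A B i (i+1) = B (i-k) (i+1-k)" by (rule N5) (use d R5 assms in linarith)+
      moreover have "i - k = j" "i + 1 - k = j + 1" using j by linarith+
      ultimately show ?thesis using e1 by simp
    next
      case e
      have "gc l B j m D (p - k) (q - k) = B (p - k) (q - k + 1 - m)" by (rule G5) (use e R5 assms L1 in linarith)+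
      moreover have "gc (k+l) (node x y k l A B) i m D p q = node x y k l A B p (q+1-m)" by (rule G5) (use e R5 assms in linarith)+
      moreover have "node x y k l A B p (q+1-m) = B (p-k) (q+1-m-k)" by (rule N5) (use e R5 assms in linarith)+
      moreover have "q - k + 1 - m = q + 1 - m - k" using e R5 assms by linarith
      ultimately show ?thesis using e1 by simp
    next
      case f
      have "gc l B j m D (p - k) (q - k) = Unc" by (rule G6) (use f R5 assms L1 in linarith)+
      moreover have "gc (k+l) (node x y k l A B) i m D p q = Unc" by (rule G6) (use f R5 assms in linarith)+
      ultimately show ?thesis using e1 by simp
    next
      case g
      have "gc l B j m D (p - k) (q - k) = B (p - k + 1 - m) (q - k + 1 - m)" by (rule G7) (use g R5 assms L1 in linarith)+
      moreover have "gc (k+l) (node x y k l A B) i m D p q = node x y k l A B (p+1-m) (q+1-m)" by (rule G7) (use g R5 assms in linarith)+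
      moreover have "node x y k l A B (p+1-m) (q+1-m) = B (p+1-m-k) (q+1-m-k)" by (rule N5) (use g R5 assms in linarith)+
      moreover have "p - k + 1 - m = p + 1 - m - k" "q - k + 1 - m = q + 1 - m - k" using g R5 assms by linarith+
      ultimately show ?thesis using e1 by simp
    qed
  next
    case R6
    have e1: "node x y k L A (gc l B j m D) p q = Unc" by (rule N6) (use R6 L assms in linarith)+
    consider "q \<le> i" | "i < q \<and> q < i + m" | "i + m \<le> q" by linarith
    then show ?thesis
    proof cases
      case 1
      have "gc (k+l) (node x y k l A B) i m D p q = node x y k l A B p q" by (rule G1) (use 1 R6 assms in linarith)+
      also have "\<dots> = Unc" by (rule N6) (use 1 R6 assms in linarith)+
      finally show ?thesis using e1 by simp
    next
      case 2
      have "gc (k+l) (node x y k l A B) i m D p q = Unc" by (rule G2) (use 2 R6 assms in linarith)+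
      then show ?thesis using e1 by simp
    next
      case 3
      have "gc (k+l) (node x y k l A B) i m D p q = node x y k l A B p (q+1-m)" by (rule G5) (use 3 R6 assms in linarith)+
      also have "\<dots> = Unc" by (rule N6) (use 3 R6 assms in linarith)+
      finally show ?thesis using e1 by simp
    qed
  qed
qed



lemma colt_R_fun: "colt (R a b) = node Unc Blue (leaves a) (leaves b) (colt a) (colt b)"
  by (rule ext)+ simp
lemma colt_W_fun: "colt (W a b) = node Blue Unc (leaves a) (leaves b) (colt a) (colt b)"
  by (rule ext)+ simp

lemma leaves1: "leaves t = 1 \<Longrightarrow> t = Leaf"
  by (cases t) (auto simp: add_is_1)

lemma colt_base_BU: "colt t 1 (leaves t + 1) \<in> {Blue, Unc}"
  using colt_base[of t] by (cases t) auto

lemma leaves_graft: "1 \<le> i \<Longrightarrow> i \<le> leaves t \<Longrightarrow> leaves (graft t i s) = leaves t + leaves s - 1"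
  by (induction t arbitrary: i) auto

lemma colt_A1: "leaves a = 1 \<Longrightarrow> colt a 1 2 = Blue"
  using leaves1 by fastforce

lemma aux_simps: "Suc 0 \<le> leaves t" "colt t (Suc 0) (Suc (leaves t)) = Blue \<or> colt t (Suc 0) (Suc (leaves t)) = Unc"
   "leaves a = Suc 0 \<Longrightarrow> colt a (Suc 0) 2 = Blue"
  using leaves_pos[of t] colt_base_BU[of t] colt_A1[of a] by auto

lemma colt_graft: "1 \<le> i \<Longrightarrow> i \<le> leaves t \<Longrightarrow> colt (graft t i s) = gc (leaves t) (colt t) i (leaves s) (colt s)"
proof (induction t arbitrary: i)
  case Leaf
  then have i: "i = 1" by simp
  show ?case
  proof (rule ext)+
    fix p q
    show "colt (graft Leaf i s) p q = gc (leaves Leaf) (colt Leaf) i (leaves s) (colt s) p q"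
    proof (cases "1 \<le> p \<and> p < q \<and> q \<le> 1 + leaves s")
      case False then show ?thesis using i by (simp add: G0 colt_out)
    next
      case True
      show ?thesis
      proof (cases "p = 1 \<and> q = 1 + leaves s")
        case True
        then show ?thesis using i G4[of "leaves s" p i q 1 "colt Leaf" "colt s"] colt_base_BU[of s] leaves_pos[of s]
          by (auto simp: glue_BU add.commute)
      next
        case False
        then show ?thesis using i True G3[of "leaves s" p i q 1 "colt Leaf" "colt s"] by simp
      qed
    qed
  qed
next
  case (R a b)
  show ?case
  proof (cases "i \<le> leaves a")
    case True
    then have g: "graft (R a b) i s = R (graft a i s) b" by simp
    show ?thesis unfolding g colt_R_fun using R True
      by (simp add: leaves_graft, intro node_graft_left)
         (auto simp: aux_simps leaves_graft)
  next
    case False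
    then have g: "graft (R a b) i s = R a (graft b (i - leaves a) s)" by simp
    show ?thesis unfolding g colt_R_fun using R False
      by (simp add: leaves_graft, intro node_graft_right)
         (auto simp: aux_simps leaves_graft)
  qed
next
  case (W a b)
  show ?case
  proof (cases "i \<le> leaves a")
    case True
    then have g: "graft (W a b) i s = W (graft a i s) b" by simp
    show ?thesis unfolding g colt_W_fun using W True
      by (simp add: leaves_graft, intro node_graft_left)
         (auto simp: aux_simps leaves_graft)
  next
    case False
    then have g: "graft (W a b) i s = W a (graft b (i - leaves a) s)" by simp
    show ?thesis unfolding g colt_W_fun using W False
      by (simp add: leaves_graft, intro node_graft_right)
         (auto simp: aux_simps leaves_graft)
  qed
qed

lemma ev_graft: "1 \<le> i \<Longrightarrow> i \<le> leaves t \<Longrightarrow> ev (graft t i s) = comp (ev t) i (ev s)"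
  by (simp add: ev_eq comp_eq colt_graft leaves_graft)



lemma node_supp:
  assumes "node x y k l A B p q \<noteq> Unc" "k \<ge> 1" "l \<ge> 1"
  shows "(p = 1 \<and> q = k + l + 1) \<or> (p = 1 \<and> q = k + 1) \<or> (p = k + 1 \<and> q = k + l + 1)
    \<or> (1 \<le> p \<and> p < q \<and> q \<le> k + 1 \<and> A p q \<noteq> Unc \<and> A p q = node x y k l A B p q)
    \<or> (k + 1 \<le> p \<and> p < q \<and> q \<le> k + l + 1 \<and> B (p - k) (q - k) \<noteq> Unc \<and> B (p - k) (q - k) = node x y k l A B p q)"
  using assms unfolding node_def by (auto split: if_splits)

lemma colt_supp:
  assumes "colt t p q \<noteq> Unc" "t = R a b \<or> t = W a b"
  shows "(p = 1 \<and> q = leaves a + leaves b + 1) \<or> (p = 1 \<and> q = leaves a + 1) \<or> (p = leaves a + 1 \<and> q = leaves a + leaves b + 1)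
    \<or> (1 \<le> p \<and> p < q \<and> q \<le> leaves a + 1 \<and> colt a p q \<noteq> Unc \<and> colt a p q = colt t p q)
    \<or> (leaves a + 1 \<le> p \<and> p < q \<and> q \<le> leaves a + leaves b + 1 \<and> colt b (p - leaves a) (q - leaves a) \<noteq> Unc
        \<and> colt b (p - leaves a) (q - leaves a) = colt t p q)"
  using assms(2)
proof
  assume t: "t = R a b"
  show ?thesis using node_supp[of Unc Blue "leaves a" "leaves b" "colt a" "colt b" p q] assms(1) t leaves_pos[of a] leaves_pos[of b]
    by simp
next
  assume t: "t = W a b"
  show ?thesis using node_supp[of Blue Unc "leaves a" "leaves b" "colt a" "colt b" p q] assms(1) t leaves_pos[of a] leaves_pos[of b]
    by simp
qed

lemma glue_notred: "x \<in> {Blue,Unc} \<Longrightarrow> glue_colour x Blue \<noteq> Red"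
  by (auto simp: glue_colour_def)

lemma colt_edge: "colt t p (p + 1) \<noteq> Red"
proof (induction t arbitrary: p)
  case Leaf then show ?case by simp
next
  case (R a b)
  show ?case
  proof
    assume red: "colt (R a b) p (p + 1) = Red"
    have nu: "colt (R a b) p (p+1) \<noteq> Unc" using red by simp
    show False using colt_supp[OF nu disjI1[OF HOL.refl]]
    proof (elim disjE)
      assume "p = 1 \<and> p + 1 = leaves a + leaves b + 1" then show False using leaves_pos[of a] leaves_pos[of b] by linarith
    next
      assume 2: "p = 1 \<and> p + 1 = leaves a + 1"
      then have "a = Leaf" using leaves1 by simp
      then show False using red 2 leaves_pos[of b] by (simp add: N2 glue_colour_def)
    next
      assume 3: "p = leaves a + 1 \<and> p + 1 = leaves a + leaves b + 1"
      then have "b = Leaf" using leaves1 by simp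
      then show False using red 3 leaves_pos[of a] by (simp add: N3 glue_colour_def)
    next
      assume "1 \<le> p \<and> p < p + 1 \<and> p + 1 \<le> leaves a + 1 \<and> colt a p (p + 1) \<noteq> Unc \<and> colt a p (p + 1) = colt (R a b) p (p + 1)"
      then show False using red R.IH(1)[of p] by simp
    next
      assume h5: "leaves a + 1 \<le> p \<and> p < p + 1 \<and> p + 1 \<le> leaves a + leaves b + 1 \<and> colt b (p - leaves a) (p + 1 - leaves a) \<noteq> Unc \<and> colt b (p - leaves a) (p + 1 - leaves a) = colt (R a b) p (p + 1)"
      then have "p + 1 - leaves a = p - leaves a + 1" by linarith
      then show False using h5 red R.IH(2)[of "p - leaves a"] by simp
    qed
  qed
next
  case (W a b)
  show ?case
  proof
    assume red: "colt (W a b) p (p + 1) = Red"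
    have nu: "colt (W a b) p (p+1) \<noteq> Unc" using red by simp
    show False using colt_supp[OF nu disjI2[OF HOL.refl]]
    proof (elim disjE)
      assume "p = 1 \<and> p + 1 = leaves a + leaves b + 1" then show False using leaves_pos[of a] leaves_pos[of b] by linarith
    next
      assume 2: "p = 1 \<and> p + 1 = leaves a + 1"
      then have "a = Leaf" using leaves1 by simp
      then show False using red 2 leaves_pos[of b] by (simp add: N2 glue_colour_def)
    next
      assume 3: "p = leaves a + 1 \<and> p + 1 = leaves a + leaves b + 1"
      then have "b = Leaf" using leaves1 by simp
      then show False using red 3 leaves_pos[of a] by (simp add: N3 glue_colour_def)
    next
      assume "1 \<le> p \<and> p < p + 1 \<and> p + 1 \<le> leaves a + 1 \<and> colt a p (p + 1) \<noteq> Unc \<and> colt a p (p + 1) = colt (W a b) p (p + 1)"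
      then show False using red W.IH(1)[of p] by simp
    next
      assume h5: "leaves a + 1 \<le> p \<and> p < p + 1 \<and> p + 1 \<le> leaves a + leaves b + 1 \<and> colt b (p - leaves a) (p + 1 - leaves a) \<noteq> Unc \<and> colt b (p - leaves a) (p + 1 - leaves a) = colt (W a b) p (p + 1)"
      then have "p + 1 - leaves a = p - leaves a + 1" by linarith
      then show False using h5 red W.IH(2)[of "p - leaves a"] by simp
    qed
  qed
qed


lemma colt_nc: "colt t i j \<noteq> Unc \<Longrightarrow> colt t k l \<noteq> Unc \<Longrightarrow> \<not> (i < k \<and> k < j \<and> j < l)"
proof (induction t arbitrary: i j k l)
  case Leaf then show ?case by (auto split: if_splits)
next
  case (R a b)
  have A: "\<not> (i < k \<and> k < j \<and> j < l)" if "colt a i j \<noteq> Unc" "colt a k l \<noteq> Unc" using R.IH(1) that by blast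
  have B: "\<not> (i - leaves a < k - leaves a \<and> k - leaves a < j - leaves a \<and> j - leaves a < l - leaves a)"
    if "colt b (i - leaves a) (j - leaves a) \<noteq> Unc" "colt b (k - leaves a) (l - leaves a) \<noteq> Unc" using R.IH(2) that by blast
  show ?case using colt_supp[OF R.prems(1) disjI1[OF HOL.refl]] colt_supp[OF R.prems(2) disjI1[OF HOL.refl]]
  proof (elim disjE)
  qed (use A B in linarith)+
next
  case (W a b)
  have A: "\<not> (i < k \<and> k < j \<and> j < l)" if "colt a i j \<noteq> Unc" "colt a k l \<noteq> Unc" using W.IH(1) that by blast
  have B: "\<not> (i - leaves a < k - leaves a \<and> k - leaves a < j - leaves a \<and> j - leaves a < l - leaves a)"
    if "colt b (i - leaves a) (j - leaves a) \<noteq> Unc" "colt b (k - leaves a) (l - leaves a) \<noteq> Unc" using W.IH(2) that by blast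
  show ?case using colt_supp[OF W.prems(1) disjI2[OF HOL.refl]] colt_supp[OF W.prems(2) disjI2[OF HOL.refl]]
  proof (elim disjE)
  qed (use A B in linarith)+
qed


lemma leaves2: "2 \<le> leaves a + leaves b" using leaves_pos[of a] leaves_pos[of b] by linarith

lemma is_bnc_ev: "is_bnc (ev t)"
proof (cases "t = Leaf")
  case True then show ?thesis by (simp add: is_bnc_def)
next
  case False
  have n: "leaves t \<ge> 2" using False leaves2 by (cases t) auto
  have f1: "\<forall>i j. colt t i j \<noteq> Unc \<longrightarrow> 1 \<le> i \<and> i < j \<and> j \<le> leaves t + 1" using colt_out by blast
  have f2: "\<forall>i j. colt t i j = Red \<longrightarrow> j \<noteq> i + 1 \<and> \<not> (i = 1 \<and> j = leaves t + 1)"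
    using colt_edge colt_base_BU[of t] by fastforce
  have f3: "\<forall>i j k l. colt t i j \<noteq> Unc \<and> colt t k l \<noteq> Unc \<longrightarrow> \<not> (i < k \<and> k < j \<and> j < l)"
    using colt_nc by blast
  show ?thesis unfolding is_bnc_def ev_eq using n f1 f2 f3 by simp
qed

lemma sz_ev: "sz (ev t) = leaves t" by (simp add: ev_eq)

lemma r_ev: "r_gen = ev (R Leaf Leaf)"
  unfolding ev_eq r_gen_def T_def by (simp, (rule ext)+, simp add: node_def glue_colour_def)
lemma w_ev: "w_gen = ev (W Leaf Leaf)"
  unfolding ev_eq w_gen_def T_def by (simp, (rule ext)+, simp add: node_def glue_colour_def)

lemma rw_in: "r_gen \<in> range ev" "w_gen \<in> range ev"
  by (simp_all only: r_ev w_ev rangeI)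

lemma range_sub: "suboperad (range ev)"
  unfolding suboperad_def
proof (intro conjI ballI allI impI)
  show "range ev \<subseteq> {B. is_bnc B}" using is_bnc_ev by auto
  show "unit_bnc \<in> range ev" using ev.simps(1) by (metis rangeI)
next
  fix C D i assume C: "C \<in> range ev" and D: "D \<in> range ev" and i: "1 \<le> i \<and> i \<le> sz C"
  obtain t s where "C = ev t" "D = ev s" using C D by auto
  then show "comp C i D \<in> range ev" using i ev_graft[of i t s] sz_ev[of t] by (metis rangeI)
qed

lemma in_sub: "suboperad S \<Longrightarrow> r_gen \<in> S \<Longrightarrow> w_gen \<in> S \<Longrightarrow> ev t \<in> S"
proof (induction t)
  case Leaf then show ?case by (simp add: suboperad_def)
next
  case (R a b)
  have "comp r_gen 2 (ev b) \<in> S" using R by (simp add: suboperad_def r_gen_def T_def)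
  moreover have "sz (comp r_gen 2 (ev b)) \<ge> 1" by (simp add: comp_eq r_gen_def T_def)
  ultimately show ?case using R unfolding suboperad_def by simp
next
  case (W a b)
  have "comp w_gen 2 (ev b) \<in> S" using W by (simp add: suboperad_def w_gen_def T_def)
  moreover have "sz (comp w_gen 2 (ev b)) \<ge> 1" by (simp add: comp_eq w_gen_def T_def)
  ultimately show ?case using W unfolding suboperad_def by simp
qed

lemma range_gen: "range ev = generated_suboperad {r_gen, w_gen}"
proof
  show "generated_suboperad {r_gen, w_gen} \<subseteq> range ev"
    unfolding generated_suboperad_def using range_sub rw_in by (intro Inter_lower) auto
  show "range ev \<subseteq> generated_suboperad {r_gen, w_gen}"
    unfolding generated_suboperad_def using in_sub by auto
qed



lemma cong_R: "cong a a' \<Longrightarrow> cong b b' \<Longrightarrow> cong (R a b) (R a' b')"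
proof -
  assume a: "cong a a'" and b: "cong b b'"
  have "cong (graft (R Leaf Leaf) 2 b) (graft (R Leaf Leaf) 2 b')"
    by (rule cong.comp[OF cong.refl b]) auto
  then have h: "cong (R Leaf b) (R Leaf b')" by simp
  have "cong (graft (R Leaf b) 1 a) (graft (R Leaf b') 1 a')"
    by (rule cong.comp[OF h a]) auto
  then show ?thesis by simp
qed

lemma cong_W: "cong a a' \<Longrightarrow> cong b b' \<Longrightarrow> cong (W a b) (W a' b')"
proof -
  assume a: "cong a a'" and b: "cong b b'"
  have "cong (graft (W Leaf Leaf) 2 b) (graft (W Leaf Leaf) 2 b')"
    by (rule cong.comp[OF cong.refl b]) auto
  then have h: "cong (W Leaf b) (W Leaf b')" by simp
  have "cong (graft (W Leaf b) 1 a) (graft (W Leaf b') 1 a')"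
    by (rule cong.comp[OF h a]) auto
  then show ?thesis by simp
qed

lemma assoc_R: "cong (R (R x y) z) (R x (R y z))"
proof -
  have h1: "cong (graft (R (R Leaf Leaf) Leaf) 3 z) (graft (R Leaf (R Leaf Leaf)) 3 z)"
    by (rule cong.comp[OF cong.relR cong.refl]) auto
  have h1': "cong (R (R Leaf Leaf) z) (R Leaf (R Leaf z))" using h1 by simp
  have h2: "cong (graft (R (R Leaf Leaf) z) 2 y) (graft (R Leaf (R Leaf z)) 2 y)"
    by (rule cong.comp[OF h1' cong.refl]) (auto simp: aux_simps)
  have h2': "cong (R (R Leaf y) z) (R Leaf (R y z))" using h2 by simp
  have h3: "cong (graft (R (R Leaf y) z) 1 x) (graft (R Leaf (R y z)) 1 x)"
    by (rule cong.comp[OF h2' cong.refl]) (auto simp: aux_simps)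
  then show ?thesis by simp
qed

lemma assoc_W: "cong (W (W x y) z) (W x (W y z))"
proof -
  have h1: "cong (graft (W (W Leaf Leaf) Leaf) 3 z) (graft (W Leaf (W Leaf Leaf)) 3 z)"
    by (rule cong.comp[OF cong.relW cong.refl]) auto
  have h1': "cong (W (W Leaf Leaf) z) (W Leaf (W Leaf z))" using h1 by simp
  have h2: "cong (graft (W (W Leaf Leaf) z) 2 y) (graft (W Leaf (W Leaf z)) 2 y)"
    by (rule cong.comp[OF h1' cong.refl]) (auto simp: aux_simps)
  have h2': "cong (W (W Leaf y) z) (W Leaf (W y z))" using h2 by simp
  have h3: "cong (graft (W (W Leaf y) z) 1 x) (graft (W Leaf (W y z)) 1 x)"
    by (rule cong.comp[OF h2' cong.refl]) (auto simp: aux_simps)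
  then show ?thesis by simp
qed

definition Nd :: "bool \<Rightarrow> tree \<Rightarrow> tree \<Rightarrow> tree" where
  "Nd c a b = (if c then R a b else W a b)"

definition hr :: "bool \<Rightarrow> tree \<Rightarrow> bool" where
  "hr c t = (\<exists>x y. t = Nd c x y)"

lemma cong_Nd: "cong a a' \<Longrightarrow> cong b b' \<Longrightarrow> cong (Nd c a b) (Nd c a' b')"
  by (cases c) (auto simp: Nd_def cong_R cong_W)

lemma leaves_Nd[simp]: "leaves (Nd c a b) = leaves a + leaves b"
  by (simp add: Nd_def)

lemma rot: "\<exists>a' b'. cong (Nd c a b) (Nd c a' b') \<and> \<not> hr c a' \<and> leaves a' + leaves b' = leaves a + leaves b"
proof (induction a arbitrary: b)
  case Leaf
  then show ?case by (intro exI[of _ Leaf] exI[of _ b]) (auto simp: hr_def Nd_def intro: cong.refl)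
next
  case (R a1 a2)
  show ?case
  proof (cases c)
    case True
    obtain a' b' where h: "cong (Nd c a1 (R a2 b)) (Nd c a' b')" "\<not> hr c a'"
      "leaves a' + leaves b' = leaves a1 + leaves (R a2 b)" using R.IH(1)[of "R a2 b"] by blast
    have "cong (Nd c (R a1 a2) b) (Nd c a1 (R a2 b))" using True by (simp add: Nd_def assoc_R)
    then show ?thesis using h by (intro exI[of _ a'] exI[of _ b']) (auto intro: cong.trans)
  next
    case False
    then show ?thesis by (intro exI[of _ "R a1 a2"] exI[of _ b]) (auto simp: hr_def Nd_def intro: cong.refl)
  qed
next
  case (W a1 a2)
  show ?case
  proof (cases c)
    case False
    obtain a' b' where h: "cong (Nd c a1 (W a2 b)) (Nd c a' b')" "\<not> hr c a'"
      "leaves a' + leaves b' = leaves a1 + leaves (W a2 b)" using W.IH(1)[of "W a2 b"] by blast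
    have "cong (Nd c (W a1 a2) b) (Nd c a1 (W a2 b))" using False by (simp add: Nd_def assoc_W)
    then show ?thesis using h by (intro exI[of _ a'] exI[of _ b']) (auto intro: cong.trans)
  next
    case True
    then show ?thesis by (intro exI[of _ "W a1 a2"] exI[of _ b]) (auto simp: hr_def Nd_def intro: cong.refl)
  qed
qed

lemma small_eq:
  assumes "leaves t = 3" "leaves s = 3"
    and "\<And>p q. p \<in> {1,2,3} \<Longrightarrow> q \<in> {2,3,4} \<Longrightarrow> colt t p q = colt s p q"
  shows "ev t = ev s"
proof -
  have h: "colt t p q = colt s p q" for p q
  proof (cases "1 \<le> p \<and> p < q \<and> q \<le> 4")
    case True
    then have "p \<in> {1,2,3}" "q \<in> {2,3,4}" by auto
    then show ?thesis by (rule assms(3))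
  next
    case False then show ?thesis using colt_out[of p q t] colt_out[of p q s] assms(1,2) by simp
  qed
  have "colt t = colt s" by (rule ext)+ (rule h)
  then show ?thesis using assms(1,2) by (simp add: ev_eq)
qed

lemma relW_ev: "ev (W (W Leaf Leaf) Leaf) = ev (W Leaf (W Leaf Leaf))"
  apply (rule small_eq)
    apply simp
   apply simp
  apply (simp only: insert_iff empty_iff simp_thms)
  apply (elim disjE)
  apply (simp_all add: node_def glue_colour_def)
  done
lemma relR_ev: "ev (R (R Leaf Leaf) Leaf) = ev (R Leaf (R Leaf Leaf))"
  apply (rule small_eq)
    apply simp
   apply simp
  apply (simp only: insert_iff empty_iff simp_thms)
  apply (elim disjE)
  apply (simp_all add: node_def glue_colour_def)
  done

lemma sound: "cong t s \<Longrightarrow> ev t = ev s"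
proof (induction rule: cong.induct)
  case relW
  show ?case by (rule relW_ev)
next
  case relR
  show ?case by (rule relR_ev)
next
  case (comp t t' s s' i)
  have "leaves t = leaves t'" using comp.IH(1) by (metis sz_ev)
  then show ?case using comp ev_graft by metis
qed auto


definition xc :: "bool \<Rightarrow> colour" where "xc c = (if c then Unc else Blue)"
definition yc :: "bool \<Rightarrow> colour" where "yc c = (if c then Blue else Unc)"

lemma colt_Nd: "colt (Nd c a b) = node (xc c) (yc c) (leaves a) (leaves b) (colt a) (colt b)"
  by (cases c) (simp_all add: Nd_def xc_def yc_def colt_R_fun colt_W_fun)

lemma xc_BU: "xc c \<in> {Blue, Unc}" by (simp add: xc_def)

lemma not_leaf_Nd: "t \<noteq> Leaf \<Longrightarrow> \<exists>c a b. t = Nd c a b"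
  by (cases t) (auto simp: Nd_def intro: exI[of _ True] exI[of _ False])

lemma base_other: "\<not> hr c a \<Longrightarrow> leaves a \<ge> 2 \<Longrightarrow> colt a 1 (leaves a + 1) = (if c then Unc else Blue)"
  using colt_base[of a] by (cases a) (auto simp: hr_def Nd_def split: if_splits)

lemma glue_other_nz: "\<not> hr c a \<Longrightarrow> leaves a \<ge> 2 \<Longrightarrow> glue_colour (xc c) (colt a 1 (leaves a + 1)) \<noteq> Unc"
  using base_other[of c a] by (cases c) (auto simp: xc_def glue_colour_def)

lemma glue_inj: "x \<in> {Blue,Unc} \<Longrightarrow> d \<in> {Blue,Unc} \<Longrightarrow> e \<in> {Blue,Unc} \<Longrightarrow> glue_colour x d = glue_colour x e \<Longrightarrow> d = e"
  by (auto simp: glue_colour_def)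

lemma split_lt:
  assumes "\<not> hr c a2" "leaves a1 < leaves a2" "leaves a1 + leaves b1 = leaves a2 + leaves b2"
  shows "colt (Nd c a1 b1) \<noteq> colt (Nd c a2 b2)"
proof
  assume eq: "colt (Nd c a1 b1) = colt (Nd c a2 b2)"
  have l: "leaves a1 \<ge> 1" "leaves b1 \<ge> 1" "leaves b2 \<ge> 1" using leaves_pos by auto
  have "colt (Nd c a1 b1) 1 (leaves a2 + 1) = Unc"
    unfolding colt_Nd by (rule N6) (use assms l in linarith)+
  moreover have "colt (Nd c a2 b2) 1 (leaves a2 + 1) = glue_colour (xc c) (colt a2 1 (leaves a2 + 1))"
    unfolding colt_Nd by (rule N2) (use l in simp_all)
  moreover have "glue_colour (xc c) (colt a2 1 (leaves a2 + 1)) \<noteq> Unc"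
    by (rule glue_other_nz) (use assms l in linarith)+
  ultimately show False using eq by simp
qed

lemma core:
  assumes h1: "\<not> hr c a1" and h2: "\<not> hr c a2" and n: "leaves a1 + leaves b1 = leaves a2 + leaves b2"
    and eq: "colt (Nd c a1 b1) = colt (Nd c a2 b2)"
  shows "leaves a1 = leaves a2 \<and> leaves b1 = leaves b2 \<and> colt a1 = colt a2 \<and> colt b1 = colt b2"
proof -
  have k: "leaves a1 = leaves a2"
  proof (rule ccontr)
    assume "leaves a1 \<noteq> leaves a2"
    then consider "leaves a1 < leaves a2" | "leaves a2 < leaves a1" by linarith
    then show False
    proof cases
      case 1 then show False using split_lt[OF h2 1 n] eq by simp
    next
      case 2 then show False using split_lt[OF h1 2 n[symmetric]] eq by simp
    qed
  qed
  define k where "k = leaves a1"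
  define l where "l = leaves b1"
  have l2: "leaves b2 = l" using n k l_def by simp
  have kl: "k \<ge> 1" "l \<ge> 1" using leaves_pos k_def l_def by auto
  have E: "node (xc c) (yc c) k l (colt a1) (colt b1) p q = node (xc c) (yc c) k l (colt a2) (colt b2) p q" for p q
    using eq unfolding colt_Nd k_def l_def by (metis k l2 l_def)
  have A: "colt a1 p q = colt a2 p q" for p q
  proof -
    consider "p = 1 \<and> q = k + 1" | "1 \<le> p \<and> p < q \<and> q \<le> k + 1 \<and> \<not> (p = 1 \<and> q = k + 1)"
      | "\<not> (1 \<le> p \<and> p < q \<and> q \<le> k + 1)" by linarith
    then show ?thesis
    proof cases
      case 1
      show ?thesis
      proof (cases "k = 1")
        case True
        then have "a1 = Leaf" "a2 = Leaf" using leaves1 k k_def by auto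
        then show ?thesis by simp
      next
        case False
        then show ?thesis using 1 base_other[OF h1] base_other[OF h2] k k_def kl by auto
      qed
    next
      case 2
      have "node (xc c) (yc c) k l (colt a1) (colt b1) p q = colt a1 p q" by (rule N4) (use 2 kl in linarith)+
      moreover have "node (xc c) (yc c) k l (colt a2) (colt b2) p q = colt a2 p q" by (rule N4) (use 2 kl in linarith)+
      ultimately show ?thesis using E by metis
    next
      case 3
      then show ?thesis using colt_out[of p q a1] colt_out[of p q a2] k k_def by simp
    qed
  qed
  have B: "colt b1 p q = colt b2 p q" for p q
  proof -
    consider "p = 1 \<and> q = l + 1" | "1 \<le> p \<and> p < q \<and> q \<le> l + 1 \<and> \<not> (p = 1 \<and> q = l + 1)"
      | "\<not> (1 \<le> p \<and> p < q \<and> q \<le> l + 1)" by linarith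
    then show ?thesis
    proof cases
      case 1
      have "node (xc c) (yc c) k l (colt a1) (colt b1) (k+1) (k+l+1) = glue_colour (xc c) (colt b1 1 (l+1))" by (rule N3) (use kl in simp_all)
      moreover have "node (xc c) (yc c) k l (colt a2) (colt b2) (k+1) (k+l+1) = glue_colour (xc c) (colt b2 1 (l+1))" by (rule N3) (use kl in simp_all)
      ultimately have "glue_colour (xc c) (colt b1 1 (l+1)) = glue_colour (xc c) (colt b2 1 (l+1))" using E by metis
      then have "colt b1 1 (l+1) = colt b2 1 (l+1)"
        using glue_inj[OF xc_BU] colt_base_BU[of b1] colt_base_BU[of b2] l_def l2 by metis
      then show ?thesis using 1 by simp
    next
      case 2
      have "node (xc c) (yc c) k l (colt a1) (colt b1) (p+k) (q+k) = colt b1 (p+k-k) (q+k-k)" by (rule N5) (use 2 kl in linarith)+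
      moreover have "node (xc c) (yc c) k l (colt a2) (colt b2) (p+k) (q+k) = colt b2 (p+k-k) (q+k-k)" by (rule N5) (use 2 kl in linarith)+
      ultimately show ?thesis using E by (metis add_diff_cancel_right')
    next
      case 3
      then show ?thesis using colt_out[of p q b1] colt_out[of p q b2] l2 l_def by simp
    qed
  qed
  have "colt a1 = colt a2" "colt b1 = colt b2" using A B by (auto intro!: ext)
  then show ?thesis using k l2 l_def by simp
qed

lemma ev_iff: "ev t = ev s \<longleftrightarrow> leaves t = leaves s \<and> colt t = colt s"
  by (simp add: ev_eq)

lemma inj_cong: "leaves t = leaves s \<Longrightarrow> colt t = colt s \<Longrightarrow> cong t s"
proof (induction "leaves t" arbitrary: t s rule: less_induct)
  case less
  show ?case
  proof (cases "t = Leaf")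
    case True
    then have "s = Leaf" using less.prems leaves1 by simp
    then show ?thesis using True cong.refl by simp
  next
    case False
    then obtain c a b where t: "t = Nd c a b" using not_leaf_Nd by blast
    have "s \<noteq> Leaf" using less.prems t leaves2[of a b] by auto
    then obtain c' a' b' where s: "s = Nd c' a' b'" using not_leaf_Nd by blast
    have "yc c = yc c'"
    proof -
      have "colt t 1 (leaves t + 1) = yc c" unfolding t colt_Nd by (rule N1) simp_all
      moreover have "colt s 1 (leaves s + 1) = yc c'" unfolding s colt_Nd by (rule N1) simp_all
      ultimately show ?thesis using less.prems by simp
    qed
    then have cc: "c' = c" by (cases c; cases c') (auto simp: yc_def)
    obtain a1 b1 where r1: "cong (Nd c a b) (Nd c a1 b1)" "\<not> hr c a1" "leaves a1 + leaves b1 = leaves a + leaves b"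
      using rot by blast
    obtain a2 b2 where r2: "cong (Nd c a' b') (Nd c a2 b2)" "\<not> hr c a2" "leaves a2 + leaves b2 = leaves a' + leaves b'"
      using rot by blast
    have e1: "ev t = ev (Nd c a1 b1)" using sound[OF r1(1)] t by simp
    have e2: "ev s = ev (Nd c a2 b2)" using sound[OF r2(1)] s cc by simp
    have "colt (Nd c a1 b1) = colt (Nd c a2 b2)" using e1 e2 less.prems ev_iff by metis
    moreover have "leaves a1 + leaves b1 = leaves a2 + leaves b2" using r1 r2 less.prems t s by simp
    ultimately have co: "leaves a1 = leaves a2 \<and> leaves b1 = leaves b2 \<and> colt a1 = colt a2 \<and> colt b1 = colt b2"
      using core[OF r1(2) r2(2)] by blast
    have lt: "leaves a1 < leaves t" "leaves b1 < leaves t" using r1(3) t leaves_pos[of a1] leaves_pos[of b1] by simp_all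
    have "cong a1 a2" using less.hyps[OF lt(1)] co by blast
    moreover have "cong b1 b2" using less.hyps[OF lt(2)] co by blast
    ultimately have "cong (Nd c a1 b1) (Nd c a2 b2)" by (rule cong_Nd)
    then have "cong t (Nd c a2 b2)" using r1(1) t cong.trans by blast
    then show ?thesis using r2(1) s cc cong.trans cong.sym by blast
  qed
qed

theorem theorem3p33:
  shows "(\<forall>t i s. 1 \<le> i \<and> i \<le> leaves t \<longrightarrow> ev (graft t i s) = comp (ev t) i (ev s))
    \<and> range ev = generated_suboperad {r_gen, w_gen}
    \<and> (\<forall>t s. ev t = ev s \<longleftrightarrow> cong t s)"
  using ev_graft range_gen sound inj_cong ev_iff by blast


end
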